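(* Let $\mathcal K$ be a 2-category, let $(V,\psi),(W,\phi):(t,\mu,\eta)\to(t',\mu',\eta')$ be 1-cells in $\mathrm{EM}^w(\mathcal K)$ and let $\omega:V\Rightarrow W$ be a 2-cell in $\mathcal K$. (1) The following are equivalent: (i) $\omega t\ast\psi\ast\eta'V$ is a 2-cell $(V,\psi)\Rightarrow(W,\phi)$ in $\mathrm{EM}^w(\mathcal K)$; (ii) $\omega t\ast\psi=W\mu\ast\phi t\ast t'\omega t\ast t'\psi\ast t'\eta'V$; (iii) $W\mu\ast\phi t\ast\eta'Wt\ast\omega t\ast\psi\ast\eta'V=\omega t\ast\psi\ast\eta'V$ and $W\mu\ast\phi t\ast\eta'Wt\ast\omega t\ast\psi=W\mu\ast\phi t\ast t'\omega t\ast t'\psi\ast t'\eta'V$. (2) The following are equivalent: (i) $\phi\ast\eta'W\ast\omega$ is a 2-cell $(V,\psi)\Rightarrow(W,\phi)$ in $\mathrm{EM}^w(\mathcal K)$; (ii) $\phi\ast t'\omega=W\mu\ast\phi t\ast\eta'Wt\ast\omega t\ast\psi$; (iii) $W\mu\ast\phi t\ast\eta'Wt\ast\omega t\ast\psi\ast\eta'V=\phi\ast\eta'W\ast\omega$ and $W\mu\ast\phi t\ast\eta'Wt\ast\omega t\ast\psi=W\mu\ast\phi t\ast t'\omega t\ast t'\psi\ast t'\eta'V$. (3) The following are equivalent: (i) $\phi\ast t'\omega=\omega t\ast\psi$; (ii) both $\phi\ast\eta'W\ast\omega$ and $\omega t\ast\psi\ast\eta'V$ are 2-cells $(V,\psi)\Rightarrow(W,\phi)$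 in $\mathrm{EM}^w(\mathcal K)$. Moreover, when these hold, $\phi\ast\eta'W\ast\omega=\omega t\ast\psi\ast\eta'V$.
   Context: Conventions in a 2-category $\mathcal K$: horizontal composition and whiskering by juxtaposition in the order of functor composition ($V:k\to k'$, $V':k'\to k''$ give $V'V$); identity 1-cell of $k$ written $k$, identity 2-cell of $V$ written $V$; vertical composition $\ast$ with $\alpha\ast\beta$ meaning $\beta$ then $\alpha$. A monad $(t,\mu,\eta)$ on $k$: $t:k\to k$, $\mu:tt\Rightarrow t$, $\eta:k\Rightarrow t$, $\mu\ast\mu t=\mu\ast t\mu$, $\mu\ast\eta t=t=\mu\ast t\eta$. The 2-category $\mathrm{EM}^w(\mathcal K)$: 0-cells are monads in $\mathcal K$; a 1-cell $(t,\mu,\eta)\to(t',\mu',\eta')$ ($t$ on $k$, $t'$ on $k'$) is a pair $(V,\psi)$, $V:k\to k'$, $\psi:t'V\Rightarrow Vt$, with $V\mu\ast\psi t\ast t'\psi=\psi\ast\mu'V$; a 2-cell $(V,\psi)\Rightarrow(W,\phi)$ is a 2-cell $\varrho:V\Rightarrow Wt$ of $\mathcal K$ with (a) $W\mu\ast\varrho t\ast\psi=W\mu\ast\phi t\ast t'\varrho$ and (b) $\varrho=W\mu\ast\phi t\ast\eta'Wt\ast\varrho$. *)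

theory Defs
  imports Main
begin

text \<open>A (strict) 2-category, presented as a partial algebra.
  0-cells of type 'o, 1-cells of type 'a, 2-cells of type 'c.
  cmp1 g f is g after f (written gf in the paper), hcmp b a is the horizontal
  composite of b after a, vcmp b a is the vertical composite "b * a" (a first, then b).\<close>

record ('o, 'a, 'c) twocat =
  Ob   :: "'o set"
  Arr1 :: "'a set"
  src1 :: "'a \<Rightarrow> 'o"
  trg1 :: "'a \<Rightarrow> 'o"
  idc  :: "'o \<Rightarrow> 'a"
  cmp1 :: "'a \<Rightarrow> 'a \<Rightarrow> 'a"
  Arr2 :: "'c set"
  dom2 :: "'c \<Rightarrow> 'a"
  cod2 :: "'c \<Rightarrow> 'a"
  id2  :: "'a \<Rightarrow> 'c"
  vcmp :: "'c \<Rightarrow> 'c \<Rightarrow> 'c"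
  hcmp :: "'c \<Rightarrow> 'c \<Rightarrow> 'c"

definition two_category :: "('o, 'a, 'c) twocat \<Rightarrow> bool" where
  "two_category K \<longleftrightarrow>
    (\<forall>f\<in>Arr1 K. src1 K f \<in> Ob K \<and> trg1 K f \<in> Ob K) \<and>
    (\<forall>x\<in>Ob K. idc K x \<in> Arr1 K \<and> src1 K (idc K x) = x \<and> trg1 K (idc K x) = x) \<and>
    (\<forall>f\<in>Arr1 K. \<forall>g\<in>Arr1 K. src1 K g = trg1 K f \<longrightarrow>
        cmp1 K g f \<in> Arr1 K \<and> src1 K (cmp1 K g f) = src1 K f \<and> trg1 K (cmp1 K g f) = trg1 K g) \<and>
    (\<forall>f\<in>Arr1 K. \<forall>g\<in>Arr1 K. \<forall>h\<in>Arr1 K. src1 K g = trg1 K f \<and> src1 K h = trg1 K g \<longrightarrow>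
        cmp1 K h (cmp1 K g f) = cmp1 K (cmp1 K h g) f) \<and>
    (\<forall>f\<in>Arr1 K. cmp1 K (idc K (trg1 K f)) f = f \<and> cmp1 K f (idc K (src1 K f)) = f) \<and>
    (\<forall>a\<in>Arr2 K. dom2 K a \<in> Arr1 K \<and> cod2 K a \<in> Arr1 K \<and>
        src1 K (dom2 K a) = src1 K (cod2 K a) \<and> trg1 K (dom2 K a) = trg1 K (cod2 K a)) \<and>
    (\<forall>f\<in>Arr1 K. id2 K f \<in> Arr2 K \<and> dom2 K (id2 K f) = f \<and> cod2 K (id2 K f) = f) \<and>
    (\<forall>a\<in>Arr2 K. \<forall>b\<in>Arr2 K. cod2 K a = dom2 K b \<longrightarrow>
        vcmp K b a \<in> Arr2 K \<and> dom2 K (vcmp K b a) = dom2 K a \<and> cod2 K (vcmp K b a) = cod2 K b) \<and>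
    (\<forall>a\<in>Arr2 K. \<forall>b\<in>Arr2 K. \<forall>c\<in>Arr2 K. cod2 K a = dom2 K b \<and> cod2 K b = dom2 K c \<longrightarrow>
        vcmp K c (vcmp K b a) = vcmp K (vcmp K c b) a) \<and>
    (\<forall>a\<in>Arr2 K. vcmp K (id2 K (cod2 K a)) a = a \<and> vcmp K a (id2 K (dom2 K a)) = a) \<and>
    (\<forall>a\<in>Arr2 K. \<forall>b\<in>Arr2 K. src1 K (dom2 K b) = trg1 K (dom2 K a) \<longrightarrow>
        hcmp K b a \<in> Arr2 K \<and> dom2 K (hcmp K b a) = cmp1 K (dom2 K b) (dom2 K a) \<and>
        cod2 K (hcmp K b a) = cmp1 K (cod2 K b) (cod2 K a)) \<and>
    (\<forall>a\<in>Arr2 K. \<forall>b\<in>Arr2 K. \<forall>c\<in>Arr2 K.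
        src1 K (dom2 K b) = trg1 K (dom2 K a) \<and> src1 K (dom2 K c) = trg1 K (dom2 K b) \<longrightarrow>
        hcmp K c (hcmp K b a) = hcmp K (hcmp K c b) a) \<and>
    (\<forall>a\<in>Arr2 K. hcmp K (id2 K (idc K (trg1 K (dom2 K a)))) a = a \<and>
        hcmp K a (id2 K (idc K (src1 K (dom2 K a)))) = a) \<and>
    (\<forall>f\<in>Arr1 K. \<forall>g\<in>Arr1 K. src1 K g = trg1 K f \<longrightarrow>
        hcmp K (id2 K g) (id2 K f) = id2 K (cmp1 K g f)) \<and>
    (\<forall>a\<in>Arr2 K. \<forall>a'\<in>Arr2 K. \<forall>b\<in>Arr2 K. \<forall>b'\<in>Arr2 K.
        cod2 K a = dom2 K a' \<and> cod2 K b = dom2 K b' \<and> src1 K (dom2 K b) = trg1 K (dom2 K a) \<longrightarrow>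
        hcmp K (vcmp K b' b) (vcmp K a' a) = vcmp K (hcmp K b' a') (hcmp K b a))"

text \<open>Whiskering: wl K V a is "V a" (V after a); wr K a V is "a V" (a after V).\<close>
definition wl :: "('o, 'a, 'c) twocat \<Rightarrow> 'a \<Rightarrow> 'c \<Rightarrow> 'c" where
  "wl K V a = hcmp K (id2 K V) a"
definition wr :: "('o, 'a, 'c) twocat \<Rightarrow> 'c \<Rightarrow> 'a \<Rightarrow> 'c" where
  "wr K a V = hcmp K a (id2 K V)"

definition cell2 :: "('o, 'a, 'c) twocat \<Rightarrow> 'c \<Rightarrow> 'a \<Rightarrow> 'a \<Rightarrow> bool" where
  "cell2 K a V W \<longleftrightarrow> a \<in> Arr2 K \<and> dom2 K a = V \<and> cod2 K a = W"

definition monad :: "('o, 'a, 'c) twocat \<Rightarrow> 'o \<Rightarrow> 'a \<Rightarrow> 'c \<Rightarrow> 'c \<Rightarrow> bool" where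
  "monad K k t mu eta \<longleftrightarrow>
    k \<in> Ob K \<and> t \<in> Arr1 K \<and> src1 K t = k \<and> trg1 K t = k \<and>
    cell2 K mu (cmp1 K t t) t \<and> cell2 K eta (idc K k) t \<and>
    vcmp K mu (wr K mu t) = vcmp K mu (wl K t mu) \<and>
    vcmp K mu (wr K eta t) = id2 K t \<and> vcmp K mu (wl K t eta) = id2 K t"

definition em_1cell :: "('o, 'a, 'c) twocat \<Rightarrow> 'o \<Rightarrow> 'a \<Rightarrow> 'c \<Rightarrow> 'c \<Rightarrow>
    'o \<Rightarrow> 'a \<Rightarrow> 'c \<Rightarrow> 'c \<Rightarrow> 'a \<Rightarrow> 'c \<Rightarrow> bool" where
  "em_1cell K k t mu eta k' t' mu' eta' V psi \<longleftrightarrow>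
    V \<in> Arr1 K \<and> src1 K V = k \<and> trg1 K V = k' \<and>
    cell2 K psi (cmp1 K t' V) (cmp1 K V t) \<and>
    vcmp K (wl K V mu) (vcmp K (wr K psi t) (wl K t' psi)) = vcmp K psi (wr K mu' V)"

definition em_2cell :: "('o, 'a, 'c) twocat \<Rightarrow> 'a \<Rightarrow> 'c \<Rightarrow> 'c \<Rightarrow> 'a \<Rightarrow> 'c \<Rightarrow> 'c \<Rightarrow>
    'a \<Rightarrow> 'c \<Rightarrow> 'a \<Rightarrow> 'c \<Rightarrow> 'c \<Rightarrow> bool" where
  "em_2cell K t mu eta t' mu' eta' V psi W phi rho \<longleftrightarrow>
    cell2 K rho V (cmp1 K W t) \<and>
    vcmp K (wl K W mu) (vcmp K (wr K rho t) psi) =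
      vcmp K (wl K W mu) (vcmp K (wr K phi t) (wl K t' rho)) \<and>
    rho = vcmp K (wl K W mu) (vcmp K (wr K phi t) (vcmp K (wr K eta' (cmp1 K W t)) rho))"

end

theory Submission
  imports Defs
begin

locale tc = fixes K :: "('o,'a,'c) twocat" assumes K: "two_category K"
begin

lemmas Kc = K[unfolded two_category_def]
lemmas K1 = Kc[THEN conjunct1]
lemmas K2 = Kc[THEN conjunct2, THEN conjunct1]
lemmas K3 = Kc[THEN conjunct2, THEN conjunct2, THEN conjunct1]
lemmas K4 = Kc[THEN conjunct2, THEN conjunct2, THEN conjunct2, THEN conjunct1]
lemmas K5 = Kc[THEN conjunct2, THEN conjunct2, THEN conjunct2, THEN conjunct2, THEN conjunct1]
lemmas K6 = Kc[THEN conjunct2, THEN conjunct2, THEN conjunct2, THEN conjunct2, THEN conjunct2, THEN conjunct1]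
lemmas K7 = Kc[THEN conjunct2, THEN conjunct2, THEN conjunct2, THEN conjunct2, THEN conjunct2, THEN conjunct2, THEN conjunct1]
lemmas K8 = Kc[THEN conjunct2, THEN conjunct2, THEN conjunct2, THEN conjunct2, THEN conjunct2, THEN conjunct2, THEN conjunct2, THEN conjunct1]
lemmas K9 = Kc[THEN conjunct2, THEN conjunct2, THEN conjunct2, THEN conjunct2, THEN conjunct2, THEN conjunct2, THEN conjunct2, THEN conjunct2, THEN conjunct1]
lemmas K10 = Kc[THEN conjunct2, THEN conjunct2, THEN conjunct2, THEN conjunct2, THEN conjunct2, THEN conjunct2, THEN conjunct2, THEN conjunct2, THEN conjunct2, THEN conjunct1]
lemmas K11 = Kc[THEN conjunct2, THEN conjunct2, THEN conjunct2, THEN conjunct2, THEN conjunct2, THEN conjunct2, THEN conjunct2, THEN conjunct2, THEN conjunct2, THEN conjunct2, THEN conjunct1]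
lemmas K12 = Kc[THEN conjunct2, THEN conjunct2, THEN conjunct2, THEN conjunct2, THEN conjunct2, THEN conjunct2, THEN conjunct2, THEN conjunct2, THEN conjunct2, THEN conjunct2, THEN conjunct2, THEN conjunct1]
lemmas K13 = Kc[THEN conjunct2, THEN conjunct2, THEN conjunct2, THEN conjunct2, THEN conjunct2, THEN conjunct2, THEN conjunct2, THEN conjunct2, THEN conjunct2, THEN conjunct2, THEN conjunct2, THEN conjunct2, THEN conjunct1]
lemmas K14 = Kc[THEN conjunct2, THEN conjunct2, THEN conjunct2, THEN conjunct2, THEN conjunct2, THEN conjunct2, THEN conjunct2, THEN conjunct2, THEN conjunct2, THEN conjunct2, THEN conjunct2, THEN conjunct2, THEN conjunct2, THEN conjunct1]
lemmas K15 = Kc[THEN conjunct2, THEN conjunct2, THEN conjunct2, THEN conjunct2, THEN conjunct2, THEN conjunct2, THEN conjunct2, THEN conjunct2, THEN conjunct2, THEN conjunct2, THEN conjunct2, THEN conjunct2, THEN conjunct2, THEN conjunct2]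
lemma ax1: "f\<in>Arr1 K \<Longrightarrow> src1 K f \<in> Ob K"
  using K1 by blast
lemma ax2: "f\<in>Arr1 K \<Longrightarrow> trg1 K f \<in> Ob K"
  using K1 by blast
lemma ax3: "x\<in>Ob K \<Longrightarrow> idc K x \<in> Arr1 K"
  using K2 by blast
lemma ax4: "x\<in>Ob K \<Longrightarrow> src1 K (idc K x) = x"
  using K2 by blast
lemma ax5: "x\<in>Ob K \<Longrightarrow> trg1 K (idc K x) = x"
  using K2 by blast
lemma ax6: "f\<in>Arr1 K \<Longrightarrow> g\<in>Arr1 K \<Longrightarrow> src1 K g = trg1 K f \<Longrightarrow> cmp1 K g f \<in> Arr1 K"
  using K3 by blast
lemma ax7: "f\<in>Arr1 K \<Longrightarrow> g\<in>Arr1 K \<Longrightarrow> src1 K g = trg1 K f \<Longrightarrow> src1 K (cmp1 K g f) = src1 K f"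
  using K3 by blast
lemma ax8: "f\<in>Arr1 K \<Longrightarrow> g\<in>Arr1 K \<Longrightarrow> src1 K g = trg1 K f \<Longrightarrow> trg1 K (cmp1 K g f) = trg1 K g"
  using K3 by blast
lemma ax9: "f\<in>Arr1 K \<Longrightarrow> g\<in>Arr1 K \<Longrightarrow> h\<in>Arr1 K \<Longrightarrow> src1 K g = trg1 K f \<Longrightarrow> src1 K h = trg1 K g \<Longrightarrow> cmp1 K h (cmp1 K g f) = cmp1 K (cmp1 K h g) f"
  using K4 by blast
lemma ax10: "f\<in>Arr1 K \<Longrightarrow> cmp1 K (idc K (trg1 K f)) f = f"
  using K5 by blast
lemma ax11: "f\<in>Arr1 K \<Longrightarrow> cmp1 K f (idc K (src1 K f)) = f"
  using K5 by blast
lemma ax12: "a\<in>Arr2 K \<Longrightarrow> dom2 K a \<in> Arr1 K"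
  using K6 by blast
lemma ax13: "a\<in>Arr2 K \<Longrightarrow> cod2 K a \<in> Arr1 K"
  using K6 by blast
lemma ax14: "a\<in>Arr2 K \<Longrightarrow> src1 K (cod2 K a) = src1 K (dom2 K a)"
  using K6 by metis
lemma ax15: "a\<in>Arr2 K \<Longrightarrow> trg1 K (cod2 K a) = trg1 K (dom2 K a)"
  using K6 by metis
lemma ax16: "f\<in>Arr1 K \<Longrightarrow> id2 K f \<in> Arr2 K"
  using K7 by blast
lemma ax17: "f\<in>Arr1 K \<Longrightarrow> dom2 K (id2 K f) = f"
  using K7 by blast
lemma ax18: "f\<in>Arr1 K \<Longrightarrow> cod2 K (id2 K f) = f"
  using K7 by blast
lemma ax19: "a\<in>Arr2 K \<Longrightarrow> b\<in>Arr2 K \<Longrightarrow> cod2 K a = dom2 K b \<Longrightarrow> vcmp K b a \<in> Arr2 K"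
  using K8 by blast
lemma ax20: "a\<in>Arr2 K \<Longrightarrow> b\<in>Arr2 K \<Longrightarrow> cod2 K a = dom2 K b \<Longrightarrow> dom2 K (vcmp K b a) = dom2 K a"
  using K8 by blast
lemma ax21: "a\<in>Arr2 K \<Longrightarrow> b\<in>Arr2 K \<Longrightarrow> cod2 K a = dom2 K b \<Longrightarrow> cod2 K (vcmp K b a) = cod2 K b"
  using K8 by blast
lemma ax22: "a\<in>Arr2 K \<Longrightarrow> b\<in>Arr2 K \<Longrightarrow> c\<in>Arr2 K \<Longrightarrow> cod2 K a = dom2 K b \<Longrightarrow> cod2 K b = dom2 K c \<Longrightarrow> vcmp K c (vcmp K b a) = vcmp K (vcmp K c b) a"
  using K9 by blast
lemma ax23: "a\<in>Arr2 K \<Longrightarrow> vcmp K (id2 K (cod2 K a)) a = a"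
  using K10 by blast
lemma ax24: "a\<in>Arr2 K \<Longrightarrow> vcmp K a (id2 K (dom2 K a)) = a"
  using K10 by blast
lemma ax25: "a\<in>Arr2 K \<Longrightarrow> b\<in>Arr2 K \<Longrightarrow> src1 K (dom2 K b) = trg1 K (dom2 K a) \<Longrightarrow> hcmp K b a \<in> Arr2 K"
  using K11 by blast
lemma ax26: "a\<in>Arr2 K \<Longrightarrow> b\<in>Arr2 K \<Longrightarrow> src1 K (dom2 K b) = trg1 K (dom2 K a) \<Longrightarrow> dom2 K (hcmp K b a) = cmp1 K (dom2 K b) (dom2 K a)"
  using K11 by blast
lemma ax27: "a\<in>Arr2 K \<Longrightarrow> b\<in>Arr2 K \<Longrightarrow> src1 K (dom2 K b) = trg1 K (dom2 K a) \<Longrightarrow> cod2 K (hcmp K b a) = cmp1 K (cod2 K b) (cod2 K a)"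
  using K11 by blast
lemma ax28: "a\<in>Arr2 K \<Longrightarrow> b\<in>Arr2 K \<Longrightarrow> c\<in>Arr2 K \<Longrightarrow> src1 K (dom2 K b) = trg1 K (dom2 K a) \<Longrightarrow> src1 K (dom2 K c) = trg1 K (dom2 K b) \<Longrightarrow> hcmp K c (hcmp K b a) = hcmp K (hcmp K c b) a"
  using K12 by blast
lemma ax29: "a\<in>Arr2 K \<Longrightarrow> hcmp K (id2 K (idc K (trg1 K (dom2 K a)))) a = a"
  using K13 by blast
lemma ax30: "a\<in>Arr2 K \<Longrightarrow> hcmp K a (id2 K (idc K (src1 K (dom2 K a)))) = a"
  using K13 by blast
lemma ax31: "f\<in>Arr1 K \<Longrightarrow> g\<in>Arr1 K \<Longrightarrow> src1 K g = trg1 K f \<Longrightarrow> hcmp K (id2 K g) (id2 K f) = id2 K (cmp1 K g f)"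
  using K14 by blast
lemma ax32: "a\<in>Arr2 K \<Longrightarrow> a'\<in>Arr2 K \<Longrightarrow> b\<in>Arr2 K \<Longrightarrow> b'\<in>Arr2 K \<Longrightarrow> cod2 K a = dom2 K a' \<Longrightarrow> cod2 K b = dom2 K b' \<Longrightarrow> src1 K (dom2 K b) = trg1 K (dom2 K a) \<Longrightarrow> hcmp K (vcmp K b' b) (vcmp K a' a) = vcmp K (hcmp K b' a') (hcmp K b a)"
  using K15 by blast
lemmas ax = ax1 ax2 ax3 ax4 ax5 ax6 ax7 ax8 ax9 ax10 ax11 ax12 ax13 ax14 ax15 ax16 ax17 ax18 ax19 ax20 ax21 ax22 ax23 ax24 ax25 ax26 ax27 ax28 ax29 ax30 ax31 ax32


lemmas [simp] = ax(1-8) ax(12-21) ax(25-27)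

lemma cmp1_assoc[simp]: "f\<in>Arr1 K \<Longrightarrow> g\<in>Arr1 K \<Longrightarrow> h\<in>Arr1 K \<Longrightarrow> src1 K g = trg1 K f \<Longrightarrow> src1 K h = trg1 K g \<Longrightarrow>
        cmp1 K (cmp1 K h g) f = cmp1 K h (cmp1 K g f)"
  using ax(9)[of f g h] by simp
lemma cmp1_idl[simp]: "f\<in>Arr1 K \<Longrightarrow> trg1 K f = x \<Longrightarrow> cmp1 K (idc K x) f = f" by (metis ax(10))
lemma cmp1_idr[simp]: "f\<in>Arr1 K \<Longrightarrow> src1 K f = x \<Longrightarrow> cmp1 K f (idc K x) = f" by (metis ax(11))
lemma vassoc[simp]: "a\<in>Arr2 K \<Longrightarrow> b\<in>Arr2 K \<Longrightarrow> c\<in>Arr2 K \<Longrightarrow> cod2 K a = dom2 K b \<Longrightarrow> cod2 K b = dom2 K c \<Longrightarrow>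
        vcmp K (vcmp K c b) a = vcmp K c (vcmp K b a)" using ax(22)[of a b c] by simp
lemma vidl[simp]: "a\<in>Arr2 K \<Longrightarrow> cod2 K a = f \<Longrightarrow> vcmp K (id2 K f) a = a" by (metis ax(23))
lemma vidr[simp]: "a\<in>Arr2 K \<Longrightarrow> dom2 K a = f \<Longrightarrow> vcmp K a (id2 K f) = a" by (metis ax(24))

lemma vid_id[simp]: "f\<in>Arr1 K \<Longrightarrow> vcmp K (id2 K f) (id2 K f) = id2 K f" by simp

lemma wl_ty[simp]:
  assumes "a\<in>Arr2 K" "V\<in>Arr1 K" "src1 K V = trg1 K (dom2 K a)"
  shows "wl K V a \<in> Arr2 K" "dom2 K (wl K V a) = cmp1 K V (dom2 K a)" "cod2 K (wl K V a) = cmp1 K V (cod2 K a)"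
  using assms unfolding wl_def by (simp_all add: ax(25,26,27))

lemma wr_ty[simp]:
  assumes "a\<in>Arr2 K" "V\<in>Arr1 K" "src1 K (dom2 K a) = trg1 K V"
  shows "wr K a V \<in> Arr2 K" "dom2 K (wr K a V) = cmp1 K (dom2 K a) V" "cod2 K (wr K a V) = cmp1 K (cod2 K a) V"
  using assms unfolding wr_def by (simp_all add: ax(25,26,27))

lemma wl_vcmp[simp]:
  assumes "a\<in>Arr2 K" "b\<in>Arr2 K" "cod2 K a = dom2 K b" "V\<in>Arr1 K" "src1 K V = trg1 K (dom2 K a)"
  shows "wl K V (vcmp K b a) = vcmp K (wl K V b) (wl K V a)"
  using assms ax(32)[of a b "id2 K V" "id2 K V"] unfolding wl_def by simp

lemma wr_vcmp[simp]:
  assumes "a\<in>Arr2 K" "b\<in>Arr2 K" "cod2 K a = dom2 K b" "V\<in>Arr1 K" "src1 K (dom2 K a) = trg1 K V"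
  shows "wr K (vcmp K b a) V = vcmp K (wr K b V) (wr K a V)"
  using assms ax(32)[of "id2 K V" "id2 K V" a b] unfolding wr_def by simp

lemma wl_id2[simp]: "f\<in>Arr1 K \<Longrightarrow> V\<in>Arr1 K \<Longrightarrow> src1 K V = trg1 K f \<Longrightarrow> wl K V (id2 K f) = id2 K (cmp1 K V f)"
  unfolding wl_def by (simp add: ax(31))
lemma wr_id2[simp]: "f\<in>Arr1 K \<Longrightarrow> V\<in>Arr1 K \<Longrightarrow> src1 K f = trg1 K V \<Longrightarrow> wr K (id2 K f) V = id2 K (cmp1 K f V)"
  unfolding wr_def by (simp add: ax(31))

lemma wl_wl[simp]:
  assumes "a\<in>Arr2 K" "V\<in>Arr1 K" "U\<in>Arr1 K" "src1 K V = trg1 K (dom2 K a)" "src1 K U = trg1 K V"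
  shows "wl K U (wl K V a) = wl K (cmp1 K U V) a"
  using assms ax(28)[of a "id2 K V" "id2 K U"] unfolding wl_def by (simp add: ax(31))

lemma wr_wr[simp]:
  assumes "a\<in>Arr2 K" "V\<in>Arr1 K" "U\<in>Arr1 K" "src1 K (dom2 K a) = trg1 K V" "src1 K V = trg1 K U"
  shows "wr K (wr K a V) U = wr K a (cmp1 K V U)"
  using assms ax(28)[of "id2 K U" "id2 K V" a] unfolding wr_def by (simp add: ax(31))

lemma wl_wr[simp]:
  assumes "a\<in>Arr2 K" "V\<in>Arr1 K" "U\<in>Arr1 K" "src1 K (dom2 K a) = trg1 K U" "src1 K V = trg1 K (dom2 K a)"
  shows "wl K V (wr K a U) = wr K (wl K V a) U"
  using assms ax(28)[of "id2 K U" a "id2 K V"] unfolding wl_def wr_def by simp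

lemma wl_idc[simp]: "a\<in>Arr2 K \<Longrightarrow> trg1 K (dom2 K a) = x \<Longrightarrow> wl K (idc K x) a = a"
  unfolding wl_def by (metis ax(29))
lemma wr_idc[simp]: "a\<in>Arr2 K \<Longrightarrow> src1 K (dom2 K a) = x \<Longrightarrow> wr K a (idc K x) = a"
  unfolding wr_def by (metis ax(30))

lemma IC:
  assumes "a\<in>Arr2 K" "b\<in>Arr2 K" "src1 K (dom2 K a) = trg1 K (dom2 K b)"
  shows "vcmp K (wr K a (cod2 K b)) (wl K (dom2 K a) b) = vcmp K (wl K (cod2 K a) b) (wr K a (dom2 K b))"
proof -
  have "vcmp K (wr K a (cod2 K b)) (wl K (dom2 K a) b) = hcmp K (vcmp K a (id2 K (dom2 K a))) (vcmp K (id2 K (cod2 K b)) b)"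
    using assms ax(32)[of b "id2 K (cod2 K b)" "id2 K (dom2 K a)" a] unfolding wl_def wr_def by simp
  also have "\<dots> = hcmp K (vcmp K (id2 K (cod2 K a)) a) (vcmp K b (id2 K (dom2 K b)))" using assms by simp
  also have "\<dots> = vcmp K (wl K (cod2 K a) b) (wr K a (dom2 K b))"
    using assms ax(32)[of "id2 K (dom2 K b)" b a "id2 K (cod2 K a)"] unfolding wl_def wr_def by simp
  finally show ?thesis .
qed

lemma shift2:
  assumes "vcmp K b a = c" "a\<in>Arr2 K" "b\<in>Arr2 K" "cod2 K a = dom2 K b" "d\<in>Arr2 K" "cod2 K d = dom2 K a"
  shows "vcmp K b (vcmp K a d) = vcmp K c d"
  using assms by (metis vassoc)

lemma shift3:
  assumes "vcmp K c (vcmp K b a) = e" "a\<in>Arr2 K" "b\<in>Arr2 K" "c\<in>Arr2 K" "cod2 K a = dom2 K b" "cod2 K b = dom2 K c"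
    "d\<in>Arr2 K" "cod2 K d = dom2 K a"
  shows "vcmp K c (vcmp K b (vcmp K a d)) = vcmp K e d"
  using assms by (metis vassoc ax(19,20,21))

end

locale em = tc K for K :: "('o,'a,'c) twocat" +
  fixes k k' :: 'o and t t' V W :: 'a and mu eta mu' eta' psi phi omega :: 'c
  assumes M: "monad K k t mu eta"
    and M': "monad K k' t' mu' eta'"
    and hV: "em_1cell K k t mu eta k' t' mu' eta' V psi"
    and hW: "em_1cell K k t mu eta k' t' mu' eta' W phi"
    and om: "cell2 K omega V W"
begin

lemma base[simp]:
  "k \<in> Ob K" "k' \<in> Ob K" "t \<in> Arr1 K" "t' \<in> Arr1 K" "V \<in> Arr1 K" "W \<in> Arr1 K"
  "src1 K t = k" "trg1 K t = k" "src1 K t' = k'" "trg1 K t' = k'"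
  "src1 K V = k" "trg1 K V = k'" "src1 K W = k" "trg1 K W = k'"
  "mu \<in> Arr2 K" "dom2 K mu = cmp1 K t t" "cod2 K mu = t"
  "eta \<in> Arr2 K" "dom2 K eta = idc K k" "cod2 K eta = t"
  "mu' \<in> Arr2 K" "dom2 K mu' = cmp1 K t' t'" "cod2 K mu' = t'"
  "eta' \<in> Arr2 K" "dom2 K eta' = idc K k'" "cod2 K eta' = t'"
  "psi \<in> Arr2 K" "dom2 K psi = cmp1 K t' V" "cod2 K psi = cmp1 K V t"
  "phi \<in> Arr2 K" "dom2 K phi = cmp1 K t' W" "cod2 K phi = cmp1 K W t"
  "omega \<in> Arr2 K" "dom2 K omega = V" "cod2 K omega = W"
  using M M' hV hW om unfolding monad_def em_1cell_def cell2_def by auto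

lemma mon_assoc: "vcmp K mu (wr K mu t) = vcmp K mu (wl K t mu)"
  and mon_u1: "vcmp K mu (wr K eta t) = id2 K t" and mon_u2: "vcmp K mu (wl K t eta) = id2 K t"
  and mon'_assoc: "vcmp K mu' (wr K mu' t') = vcmp K mu' (wl K t' mu')"
  and mon'_u1: "vcmp K mu' (wr K eta' t') = id2 K t'" and mon'_u2: "vcmp K mu' (wl K t' eta') = id2 K t'"
  and psi_ax: "vcmp K (wl K V mu) (vcmp K (wr K psi t) (wl K t' psi)) = vcmp K psi (wr K mu' V)"
  and phi_ax: "vcmp K (wl K W mu) (vcmp K (wr K phi t) (wl K t' phi)) = vcmp K phi (wr K mu' W)"
  using M M' hV hW unfolding monad_def em_1cell_def by auto

lemma eta'_nat[simp]:
  assumes "b \<in> Arr2 K" "trg1 K (dom2 K b) = k'" "cod2 K b = Y"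
  shows "vcmp K (wr K eta' Y) b = vcmp K (wl K t' b) (wr K eta' (dom2 K b))"
  using IC[of eta' b] assms by simp

abbreviation "P y \<equiv> vcmp K (wl K W mu) (vcmp K (wr K phi t) (vcmp K (wr K eta' (cmp1 K W t)) y))"
abbreviation "Q x \<equiv> vcmp K (wl K W mu) (vcmp K (wr K phi t) (wl K t' x))"
abbreviation "th \<equiv> vcmp K (wr K omega t) (vcmp K psi (wr K eta' V))"
abbreviation "ka \<equiv> vcmp K phi (vcmp K (wr K eta' W) omega)"

lemma u1X[simp]: assumes "X\<in>Arr1 K" "trg1 K X = k'"
  shows "vcmp K (wr K mu' X) (wr K eta' (cmp1 K t' X)) = id2 K (cmp1 K t' X)"
proof -
  have "wr K (vcmp K mu' (wr K eta' t')) X = wr K (id2 K t') X" by (simp only: mon'_u1)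
  thus ?thesis using assms by simp
qed

lemma u2X[simp]: assumes "X\<in>Arr1 K" "trg1 K X = k'"
  shows "vcmp K (wr K mu' X) (wr K (wl K t' eta') X) = id2 K (cmp1 K t' X)"
proof -
  have "wr K (vcmp K mu' (wl K t' eta')) X = wr K (id2 K t') X" by (simp only: mon'_u2)
  thus ?thesis using assms by simp
qed

lemma u2Xs[simp]: assumes "X\<in>Arr1 K" "trg1 K X = k'" "d \<in> Arr2 K" "cod2 K d = cmp1 K t' X"
  shows "vcmp K (wr K mu' X) (vcmp K (wr K (wl K t' eta') X) d) = d"
  using shift2[OF u2X[OF assms(1,2)]] assms by simp

lemma L1: "vcmp K (wl K W mu) (vcmp K (wr K th t) psi) = vcmp K (wr K omega t) psi"
proof -
  have ic: "vcmp K (wl K W mu) (wr K omega (cmp1 K t t)) = vcmp K (wr K omega t) (wl K V mu)"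
    using IC[of omega mu] by simp
  show ?thesis by (simp add: shift2[OF ic] shift3[OF psi_ax])
qed

lemma ic2: "vcmp K (wr K phi t) (wl K (cmp1 K t' W) mu) = vcmp K (wl K (cmp1 K W t) mu) (wr K phi (cmp1 K t t))"
  using IC[of phi mu] by simp
lemma massW: "vcmp K (wl K W mu) (wl K (cmp1 K W t) mu) = vcmp K (wl K W mu) (wr K (wl K W mu) t)"
proof -
  have "wl K W (vcmp K mu (wr K mu t)) = wl K W (vcmp K mu (wl K t mu))" by (simp only: mon_assoc)
  thus ?thesis by simp
qed
lemma phit: "vcmp K (wr K (wl K W mu) t) (vcmp K (wr K phi (cmp1 K t t)) (wr K (wl K t' phi) t)) =
   vcmp K (wr K phi t) (wr K mu' (cmp1 K W t))"
proof -
  have "wr K (vcmp K (wl K W mu) (vcmp K (wr K phi t) (wl K t' phi))) t = wr K (vcmp K phi (wr K mu' W)) t"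
    by (simp only: phi_ax)
  thus ?thesis by simp
qed
lemma mu'nat: assumes "x\<in>Arr2 K" "trg1 K (dom2 K x) = k'" "cod2 K x = Y"
  shows "vcmp K (wr K mu' Y) (wl K (cmp1 K t' t') x) = vcmp K (wl K t' x) (wr K mu' (dom2 K x))"
  using IC[of mu' x] assms by simp
lemma mu'nats: assumes "x\<in>Arr2 K" "trg1 K (dom2 K x) = k'" "cod2 K x = Y" "d\<in>Arr2 K" "cod2 K d = cmp1 K t' (cmp1 K t' (dom2 K x))"
  shows "vcmp K (wr K mu' Y) (vcmp K (wl K (cmp1 K t' t') x) d) = vcmp K (wl K t' x) (vcmp K (wr K mu' (dom2 K x)) d)"
proof -
  have Y: "Y = cod2 K x" using assms(3) by simp
  show ?thesis unfolding Y using shift2[OF mu'nat[OF assms(1,2) refl]] assms(1,2,4,5) by simp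
qed

lemmas rules = shift2[OF ic2] shift2[OF massW] shift3[OF phit] mu'nat mu'nats shift3[OF phi_ax] phi_ax
  shift3[OF psi_ax] psi_ax

lemma L7a: assumes "r\<in>Arr2 K" "dom2 K r = V" "cod2 K r = cmp1 K W t"
  shows "P r = vcmp K (Q r) (wr K eta' V)"
  using assms by simp

lemma L3: assumes "x\<in>Arr2 K" "X \<in> Arr1 K" "src1 K X = k" "trg1 K X = k'" "dom2 K x = X" "cod2 K x = cmp1 K W t"
  shows "P (Q x) = Q x"
  using assms by (simp add: rules)

lemma L4: assumes "r\<in>Arr2 K" "dom2 K r = V" "cod2 K r = cmp1 K W t"
  shows "vcmp K (wl K W mu) (vcmp K (wr K (P r) t) psi) = P (vcmp K (wl K W mu) (vcmp K (wr K r t) psi))"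
  using assms by (simp add: rules)

lemma L5: assumes "x\<in>Arr2 K" "X \<in> Arr1 K" "src1 K X = k" "trg1 K X = k'" "dom2 K x = X" "cod2 K x = cmp1 K W t"
  shows "Q (P x) = Q x"
  using assms by (simp add: rules)

lemma L6: "Q ka = vcmp K phi (wl K t' omega)"
  by (simp add: rules)

lemma L8: "P (vcmp K phi (wl K t' omega)) = vcmp K phi (wl K t' omega)"
  by (simp add: rules)

lemma L9: "vcmp K (wl K W mu) (vcmp K (wr K ka t) psi) = P (vcmp K (wr K omega t) psi)"
  by simp

lemma L10: "P th = vcmp K (P (vcmp K (wr K omega t) psi)) (wr K eta' V)"
  by simp

lemma L11: "ka = vcmp K phi (vcmp K (wl K t' omega) (wr K eta' V))"
  by simp

lemma P_ka: "P ka = ka" by (simp add: rules)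

lemma main:
  shows
   "(em_2cell K t mu eta t' mu' eta' V psi W phi
        (vcmp K (wr K omega t) (vcmp K psi (wr K eta' V)))
     \<longleftrightarrow>
     vcmp K (wr K omega t) psi =
       vcmp K (wl K W mu) (vcmp K (wr K phi t) (vcmp K (wl K t' (wr K omega t))
         (vcmp K (wl K t' psi) (wl K t' (wr K eta' V))))))
  \<and>
   (em_2cell K t mu eta t' mu' eta' V psi W phi
        (vcmp K (wr K omega t) (vcmp K psi (wr K eta' V)))
     \<longleftrightarrow>
     (vcmp K (wl K W mu) (vcmp K (wr K phi t) (vcmp K (wr K eta' (cmp1 K W t))
         (vcmp K (wr K omega t) (vcmp K psi (wr K eta' V)))))
        = vcmp K (wr K omega t) (vcmp K psi (wr K eta' V))
      \<and>
      vcmp K (wl K W mu) (vcmp K (wr K phi t) (vcmp K (wr K eta' (cmp1 K W t))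
         (vcmp K (wr K omega t) psi)))
        = vcmp K (wl K W mu) (vcmp K (wr K phi t) (vcmp K (wl K t' (wr K omega t))
         (vcmp K (wl K t' psi) (wl K t' (wr K eta' V)))))))
  \<and>
   (em_2cell K t mu eta t' mu' eta' V psi W phi
        (vcmp K phi (vcmp K (wr K eta' W) omega))
     \<longleftrightarrow>
     vcmp K phi (wl K t' omega) =
       vcmp K (wl K W mu) (vcmp K (wr K phi t) (vcmp K (wr K eta' (cmp1 K W t))
         (vcmp K (wr K omega t) psi))))
  \<and>
   (em_2cell K t mu eta t' mu' eta' V psi W phi
        (vcmp K phi (vcmp K (wr K eta' W) omega))
     \<longleftrightarrow>
     (vcmp K (wl K W mu) (vcmp K (wr K phi t) (vcmp K (wr K eta' (cmp1 K W t))
         (vcmp K (wr K omega t) (vcmp K psi (wr K eta' V)))))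
        = vcmp K phi (vcmp K (wr K eta' W) omega)
      \<and>
      vcmp K (wl K W mu) (vcmp K (wr K phi t) (vcmp K (wr K eta' (cmp1 K W t))
         (vcmp K (wr K omega t) psi)))
        = vcmp K (wl K W mu) (vcmp K (wr K phi t) (vcmp K (wl K t' (wr K omega t))
         (vcmp K (wl K t' psi) (wl K t' (wr K eta' V)))))))
  \<and>
   (vcmp K phi (wl K t' omega) = vcmp K (wr K omega t) psi
     \<longleftrightarrow>
     em_2cell K t mu eta t' mu' eta' V psi W phi
        (vcmp K phi (vcmp K (wr K eta' W) omega))
     \<and> em_2cell K t mu eta t' mu' eta' V psi W phi
        (vcmp K (wr K omega t) (vcmp K psi (wr K eta' V))))
  \<and>
   (vcmp K phi (wl K t' omega) = vcmp K (wr K omega t) psi \<longrightarrow>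
     vcmp K phi (vcmp K (wr K eta' W) omega) = vcmp K (wr K omega t) (vcmp K psi (wr K eta' V)))"
proof -
  let ?A = "vcmp K (wr K omega t) psi"
  let ?B = "vcmp K phi (wl K t' omega)"
  have Qt': "Q th = vcmp K (wl K W mu) (vcmp K (wr K phi t) (vcmp K (wl K t' (wr K omega t))
         (vcmp K (wl K t' psi) (wl K t' (wr K eta' V)))))" by simp
  have em_th: "em_2cell K t mu eta t' mu' eta' V psi W phi th \<longleftrightarrow> (?A = Q th \<and> th = P th)"
    unfolding em_2cell_def cell2_def using L1 by simp
  have em_ka: "em_2cell K t mu eta t' mu' eta' V psi W phi ka \<longleftrightarrow> P ?A = ?B"
    unfolding em_2cell_def cell2_def using L9 L6 P_ka by simp
  have l3: "P (Q th) = Q th" by (rule L3[of th V]) simp_all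
  have "vcmp K (wl K W mu) (vcmp K (wr K (P th) t) psi) = P (vcmp K (wl K W mu) (vcmp K (wr K th t) psi))"
    by (rule L4) simp_all
  then have l4: "vcmp K (wl K W mu) (vcmp K (wr K (P th) t) psi) = P ?A" by (simp only: L1)
  have l5: "Q (P th) = Q th" by (rule L5[of th V]) simp_all
  have l7a: "P th = vcmp K (Q th) (wr K eta' V)" by (rule L7a) simp_all
  have l10: "P th = vcmp K (P ?A) (wr K eta' V)" by simp
  have l11: "ka = vcmp K ?B (wr K eta' V)" by simp
  have thA: "th = vcmp K ?A (wr K eta' V)" by simp
  note l1 = L1 and l6 = L6 and l8 = L8
  have s1: "em_2cell K t mu eta t' mu' eta' V psi W phi th \<longleftrightarrow> ?A = Q th"
    using em_th l7a thA by metis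
  have s2: "em_2cell K t mu eta t' mu' eta' V psi W phi th \<longleftrightarrow> (P th = th \<and> P ?A = Q th)"
    using s1 em_th l3 l1 l4 by metis
  have s3: "em_2cell K t mu eta t' mu' eta' V psi W phi ka \<longleftrightarrow> (P th = ka \<and> P ?A = Q th)"
    using em_ka l10 l11 l5 l6 P_ka by metis
  have s4: "?B = ?A \<longleftrightarrow> em_2cell K t mu eta t' mu' eta' V psi W phi ka \<and> em_2cell K t mu eta t' mu' eta' V psi W phi th"
    using s1 em_ka l11 thA l6 l8 l3 by metis
  have s5: "?B = ?A \<longrightarrow> ka = th" using l11 thA by metis
  show ?thesis using s1 s2 s3 s4 s5 em_ka Qt' by metis
qed

end

theorem lemma1p2:
  fixes K :: "('o, 'a, 'c) twocat"
    and k k' :: 'o and t t' V W :: 'a and mu eta mu' eta' psi phi omega :: 'c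
  assumes K: "two_category K"
    and M: "monad K k t mu eta"
    and M': "monad K k' t' mu' eta'"
    and V: "em_1cell K k t mu eta k' t' mu' eta' V psi"
    and W: "em_1cell K k t mu eta k' t' mu' eta' W phi"
    and om: "cell2 K omega V W"
  shows
   "(em_2cell K t mu eta t' mu' eta' V psi W phi
        (vcmp K (wr K omega t) (vcmp K psi (wr K eta' V)))
     \<longleftrightarrow>
     vcmp K (wr K omega t) psi =
       vcmp K (wl K W mu) (vcmp K (wr K phi t) (vcmp K (wl K t' (wr K omega t))
         (vcmp K (wl K t' psi) (wl K t' (wr K eta' V))))))
  \<and>
   (em_2cell K t mu eta t' mu' eta' V psi W phi
        (vcmp K (wr K omega t) (vcmp K psi (wr K eta' V)))
     \<longleftrightarrow>
     (vcmp K (wl K W mu) (vcmp K (wr K phi t) (vcmp K (wr K eta' (cmp1 K W t))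
         (vcmp K (wr K omega t) (vcmp K psi (wr K eta' V)))))
        = vcmp K (wr K omega t) (vcmp K psi (wr K eta' V))
      \<and>
      vcmp K (wl K W mu) (vcmp K (wr K phi t) (vcmp K (wr K eta' (cmp1 K W t))
         (vcmp K (wr K omega t) psi)))
        = vcmp K (wl K W mu) (vcmp K (wr K phi t) (vcmp K (wl K t' (wr K omega t))
         (vcmp K (wl K t' psi) (wl K t' (wr K eta' V)))))))
  \<and>
   (em_2cell K t mu eta t' mu' eta' V psi W phi
        (vcmp K phi (vcmp K (wr K eta' W) omega))
     \<longleftrightarrow>
     vcmp K phi (wl K t' omega) =
       vcmp K (wl K W mu) (vcmp K (wr K phi t) (vcmp K (wr K eta' (cmp1 K W t))
         (vcmp K (wr K omega t) psi))))
  \<and>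
   (em_2cell K t mu eta t' mu' eta' V psi W phi
        (vcmp K phi (vcmp K (wr K eta' W) omega))
     \<longleftrightarrow>
     (vcmp K (wl K W mu) (vcmp K (wr K phi t) (vcmp K (wr K eta' (cmp1 K W t))
         (vcmp K (wr K omega t) (vcmp K psi (wr K eta' V)))))
        = vcmp K phi (vcmp K (wr K eta' W) omega)
      \<and>
      vcmp K (wl K W mu) (vcmp K (wr K phi t) (vcmp K (wr K eta' (cmp1 K W t))
         (vcmp K (wr K omega t) psi)))
        = vcmp K (wl K W mu) (vcmp K (wr K phi t) (vcmp K (wl K t' (wr K omega t))
         (vcmp K (wl K t' psi) (wl K t' (wr K eta' V)))))))
  \<and>
   (vcmp K phi (wl K t' omega) = vcmp K (wr K omega t) psi
     \<longleftrightarrow>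
     em_2cell K t mu eta t' mu' eta' V psi W phi
        (vcmp K phi (vcmp K (wr K eta' W) omega))
     \<and> em_2cell K t mu eta t' mu' eta' V psi W phi
        (vcmp K (wr K omega t) (vcmp K psi (wr K eta' V))))
  \<and>
   (vcmp K phi (wl K t' omega) = vcmp K (wr K omega t) psi \<longrightarrow>
     vcmp K phi (vcmp K (wr K eta' W) omega) = vcmp K (wr K omega t) (vcmp K psi (wr K eta' V)))"
proof -
  interpret em K k k' t t' V W mu eta mu' eta' psi phi omega
    by (unfold_locales) (fact K M M' V W om)+
  show ?thesis by (rule main)
qed

end
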